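(* Let $S$ be a finite-dimensional operator system with $S^{sa}=S^+-S^+$. Then $S$ contains a matrix order unit: there is $e\in S^+$ such that for every $n\ge1$ and every $X\in M_n(S)^{sa}$ there is $\lambda>0$ with $\lambda(1_n\otimes e)\pm X\ge0$ in $M_n(S)$.
   Context: An operator system here is a (possibly nonunital) norm-closed selfadjoint subspace $S\subseteq B(H)$ for a Hilbert space $H$, with $M_n(S)^+=M_n(S)\cap B(H^n)^+$; $1_n\otimes e$ is the diagonal matrix with $e$ in each diagonal entry. *)

theory Defs
  imports "HOL-Analysis.Analysis"
begin

class chilbert = ab_group_add +
  fixes cscale :: "complex \<Rightarrow> 'a \<Rightarrow> 'a"
    and cinner :: "'a \<Rightarrow> 'a \<Rightarrow> complex"
  assumes cscale_add_right: "cscale a (x + y) = cscale a x + cscale a y"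
    and cscale_add_left: "cscale (a + b) x = cscale a x + cscale b x"
    and cscale_cscale: "cscale a (cscale b x) = cscale (a * b) x"
    and cscale_one: "cscale 1 x = x"
    and cinner_add_left: "cinner (x + y) z = cinner x z + cinner y z"
    and cinner_cscale_left: "cinner (cscale a x) y = a * cinner x y"
    and cinner_conj: "cinner y x = cnj (cinner x y)"
    and cinner_self_nonneg: "Im (cinner x x) = 0 \<and> Re (cinner x x) \<ge> 0"
    and cinner_self_eq_0: "cinner x x = 0 \<longleftrightarrow> x = 0"
    and complete:
      "(\<forall>e>0. \<exists>N::nat. \<forall>m\<ge>N. \<forall>n\<ge>N. sqrt (Re (cinner (X m - X n) (X m - X n))) < e)
       \<Longrightarrow> (\<exists>L. \<forall>e>0. \<exists>N::nat. \<forall>n\<ge>N. sqrt (Re (cinner (X n - L) (X n - L))) < e)"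

definition cnorm :: "'h::chilbert \<Rightarrow> real" where
  "cnorm x = sqrt (Re (cinner x x))"

definition bounded_op :: "('h::chilbert \<Rightarrow> 'h) \<Rightarrow> bool" where
  "bounded_op T \<longleftrightarrow>
     (\<forall>x y. T (x + y) = T x + T y) \<and> (\<forall>c x. T (cscale c x) = cscale c (T x)) \<and>
     (\<exists>K. \<forall>x. cnorm (T x) \<le> K * cnorm x)"

definition pos_op :: "('h::chilbert \<Rightarrow> 'h) \<Rightarrow> bool" where
  "pos_op T \<longleftrightarrow> (\<forall>x. Im (cinner (T x) x) = 0 \<and> Re (cinner (T x) x) \<ge> 0)"

definition sa_op :: "('h::chilbert \<Rightarrow> 'h) \<Rightarrow> bool" where
  "sa_op T \<longleftrightarrow> (\<forall>x y. cinner (T x) y = cinner x (T y))"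

definition norm_closed :: "('h::chilbert \<Rightarrow> 'h) set \<Rightarrow> bool" where
  "norm_closed S \<longleftrightarrow>
     (\<forall>(Ts :: nat \<Rightarrow> 'h \<Rightarrow> 'h) T. (\<forall>k. Ts k \<in> S) \<and> bounded_op T \<and>
        (\<forall>e>0. \<exists>N. \<forall>k\<ge>N. \<forall>x. cnorm (Ts k x - T x) \<le> e * cnorm x) \<longrightarrow> T \<in> S)"

text \<open>A (possibly nonunital) operator system: a norm-closed selfadjoint subspace of B(H).\<close>
definition operator_system :: "('h::chilbert \<Rightarrow> 'h) set \<Rightarrow> bool" where
  "operator_system S \<longleftrightarrow>
     (\<forall>T\<in>S. bounded_op T) \<and>
     (\<lambda>x. 0) \<in> S \<and>
     (\<forall>T\<in>S. \<forall>U\<in>S. (\<lambda>x. T x + U x) \<in> S) \<and>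
     (\<forall>c. \<forall>T\<in>S. (\<lambda>x. cscale c (T x)) \<in> S) \<and>
     (\<forall>T\<in>S. \<exists>T'\<in>S. \<forall>x y. cinner (T x) y = cinner x (T' y)) \<and>
     norm_closed S"

definition fin_dim_op :: "('h::chilbert \<Rightarrow> 'h) set \<Rightarrow> bool" where
  "fin_dim_op S \<longleftrightarrow>
     (\<exists>B. finite B \<and> B \<subseteq> S \<and> S = {(\<lambda>x. \<Sum>b\<in>B. cscale (c b) (b x)) | c. True})"

definition S_pos :: "('h::chilbert \<Rightarrow> 'h) set \<Rightarrow> ('h \<Rightarrow> 'h) set" where
  "S_pos S = {T \<in> S. pos_op T}"

definition S_sa :: "('h::chilbert \<Rightarrow> 'h) set \<Rightarrow> ('h \<Rightarrow> 'h) set" where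
  "S_sa S = {T \<in> S. sa_op T}"

text \<open>An n \<times> n matrix is X :: nat \<Rightarrow> nat \<Rightarrow> (H \<Rightarrow> H), entries X i j for i, j < n.\<close>
definition Mn :: "nat \<Rightarrow> ('h::chilbert \<Rightarrow> 'h) set \<Rightarrow> (nat \<Rightarrow> nat \<Rightarrow> ('h \<Rightarrow> 'h)) set" where
  "Mn n S = {X. \<forall>i<n. \<forall>j<n. X i j \<in> S}"

definition mat_pos :: "nat \<Rightarrow> (nat \<Rightarrow> nat \<Rightarrow> ('h::chilbert \<Rightarrow> 'h)) \<Rightarrow> bool" where
  "mat_pos n X \<longleftrightarrow>
     (\<forall>\<xi> :: nat \<Rightarrow> 'h. Im (\<Sum>i<n. \<Sum>j<n. cinner (X i j (\<xi> j)) (\<xi> i)) = 0 \<and>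
                      Re (\<Sum>i<n. \<Sum>j<n. cinner (X i j (\<xi> j)) (\<xi> i)) \<ge> 0)"

definition mat_sa :: "nat \<Rightarrow> (nat \<Rightarrow> nat \<Rightarrow> ('h::chilbert \<Rightarrow> 'h)) \<Rightarrow> bool" where
  "mat_sa n X \<longleftrightarrow> (\<forall>i<n. \<forall>j<n. \<forall>x y. cinner (X i j x) y = cinner x (X j i y))"

definition Mn_pos :: "nat \<Rightarrow> ('h::chilbert \<Rightarrow> 'h) set \<Rightarrow> (nat \<Rightarrow> nat \<Rightarrow> ('h \<Rightarrow> 'h)) set" where
  "Mn_pos n S = {X \<in> Mn n S. mat_pos n X}"

definition Mn_sa :: "nat \<Rightarrow> ('h::chilbert \<Rightarrow> 'h) set \<Rightarrow> (nat \<Rightarrow> nat \<Rightarrow> ('h \<Rightarrow> 'h)) set" where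
  "Mn_sa n S = {X \<in> Mn n S. mat_sa n X}"

definition diag_op :: "('h::chilbert \<Rightarrow> 'h) \<Rightarrow> nat \<Rightarrow> nat \<Rightarrow> ('h \<Rightarrow> 'h)" where
  "diag_op e = (\<lambda>i j. if i = j then e else (\<lambda>x. 0))"

definition mat_add :: "(nat \<Rightarrow> nat \<Rightarrow> ('h::chilbert \<Rightarrow> 'h)) \<Rightarrow> (nat \<Rightarrow> nat \<Rightarrow> ('h \<Rightarrow> 'h)) \<Rightarrow> nat \<Rightarrow> nat \<Rightarrow> ('h \<Rightarrow> 'h)" where
  "mat_add X Y = (\<lambda>i j x. X i j x + Y i j x)"

definition mat_scale :: "complex \<Rightarrow> (nat \<Rightarrow> nat \<Rightarrow> ('h::chilbert \<Rightarrow> 'h)) \<Rightarrow> nat \<Rightarrow> nat \<Rightarrow> ('h \<Rightarrow> 'h)" where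
  "mat_scale c X = (\<lambda>i j x. cscale c (X i j x))"

end

theory Submission
  imports Defs
begin

lemma cscale_zero_right[simp]: "cscale a (0::'a::chilbert) = 0"
proof -
  have "cscale a 0 + cscale a 0 = cscale a (0::'a) + 0" using cscale_add_right[of a "0::'a" 0] by simp
  thus ?thesis by simp
qed

lemma cscale_zero_left[simp]: "cscale 0 (x::'a::chilbert) = 0"
proof -
  have "cscale 0 x + cscale 0 x = cscale 0 x + 0" using cscale_add_left[of 0 0 x] by simp
  thus ?thesis by simp
qed

lemma cscale_minus_right: "cscale a (- x) = - cscale a (x::'a::chilbert)"
  using cscale_add_right[of a x "-x"] by (metis add.commute add_0_iff eq_neg_iff_add_eq_0 cscale_zero_right right_minus)

lemma cscale_minus_left: "cscale (- a) x = - cscale a (x::'a::chilbert)"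
  using cscale_add_left[of a "-a" x] by (metis add.commute eq_neg_iff_add_eq_0 cscale_zero_left right_minus)

lemma cscale_diff_right: "cscale a (x - y) = cscale a x - cscale a (y::'a::chilbert)"
  by (metis diff_conv_add_uminus cscale_add_right cscale_minus_right)

lemma cscale_sum_right: "cscale a (sum f A) = sum (\<lambda>i. cscale a (f i :: 'a::chilbert)) A"
  by (induction A rule: infinite_finite_induct) (auto simp: cscale_add_right)

lemma cinner_zero_left[simp]: "cinner (0::'a::chilbert) y = 0"
  using cinner_add_left[of "0::'a" 0 y] by simp

lemma cinner_minus_left: "cinner (- x) y = - cinner (x::'a::chilbert) y"
  using cinner_add_left[of x "-x" y] by (metis add.commute eq_neg_iff_add_eq_0 cinner_zero_left right_minus)

lemma cinner_diff_left: "cinner (x - y) z = cinner x z - cinner (y::'a::chilbert) z"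
  by (metis diff_conv_add_uminus cinner_add_left cinner_minus_left)

lemma cinner_add_right: "cinner x (y + z) = cinner x y + cinner (x::'a::chilbert) z"
  by (metis cinner_add_left cinner_conj complex_cnj_add)

lemma cinner_cscale_right: "cinner x (cscale a y) = cnj a * cinner (x::'a::chilbert) y"
  by (metis cinner_cscale_left cinner_conj complex_cnj_mult)

lemma cinner_zero_right[simp]: "cinner x (0::'a::chilbert) = 0"
  by (metis cinner_conj cinner_zero_left complex_cnj_zero)

lemma cinner_sum_left: "cinner (sum f A) y = (\<Sum>i\<in>A. cinner (f i :: 'a::chilbert) y)"
  by (induction A rule: infinite_finite_induct) (auto simp: cinner_add_left)

lemma pos_sym:
  fixes P :: "'a::chilbert \<Rightarrow> 'a"
  assumes pos: "pos_op P" and add: "\<And>x y. P (x + y) = P x + P y"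
    and sc: "\<And>c x. P (cscale c x) = cscale c (P x)"
  shows "cinner (P y) x = cnj (cinner (P x) y)"
proof -
  define u where "u = cinner (P x) y"
  define v where "v = cinner (P y) x"
  have "Im (cinner (P (x + y)) (x + y)) = 0" using pos unfolding pos_op_def by blast
  moreover have "cinner (P (x + y)) (x + y) = cinner (P x) x + u + v + cinner (P y) y"
    by (simp add: add cinner_add_left cinner_add_right u_def v_def)
  moreover have "Im (cinner (P x) x) = 0" "Im (cinner (P y) y) = 0" using pos unfolding pos_op_def by blast+
  ultimately have 1: "Im u + Im v = 0" by simp
  have "Im (cinner (P (x + cscale \<i> y)) (x + cscale \<i> y)) = 0" using pos unfolding pos_op_def by blast
  moreover have "cinner (P (x + cscale \<i> y)) (x + cscale \<i> y) = cinner (P x) x - \<i> * u + \<i> * v + cinner (P y) y"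
    by (simp add: add sc cinner_add_left cinner_add_right cinner_cscale_left cinner_cscale_right u_def v_def algebra_simps)
  moreover note \<open>Im (cinner (P x) x) = 0\<close> \<open>Im (cinner (P y) y) = 0\<close>
  ultimately have 2: "Re v - Re u = 0" by simp
  have "v = cnj u" using 1 2 by (simp add: complex_eq_iff)
  thus ?thesis by (simp add: u_def v_def)
qed

lemma pos_cs:
  fixes P :: "'a::chilbert \<Rightarrow> 'a"
  assumes pos: "pos_op P" and add: "\<And>x y. P (x + y) = P x + P y"
    and sc: "\<And>c x. P (cscale c x) = cscale c (P x)"
  shows "2 * cmod (cinner (P a) b) \<le> Re (cinner (P a) a) + Re (cinner (P b) b)"
proof (cases "cinner (P a) b = 0")
  case True
  then show ?thesis using pos unfolding pos_op_def by (simp add: add_nonneg_nonneg)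
next
  case False
  define u where "u = cinner (P a) b"
  define w where "w = u / of_real (cmod u)"
  have u0: "cmod u > 0" using False u_def by simp
  have sym: "cinner (P b) a = cnj u" unfolding u_def by (rule pos_sym[OF pos add sc])
  have "Re (cinner (P (a + cscale (- w) b)) (a + cscale (- w) b)) \<ge> 0" using pos unfolding pos_op_def by blast
  moreover have "cinner (P (a + cscale (- w) b)) (a + cscale (- w) b)
     = cinner (P a) a - cnj w * u - w * cnj u + w * cnj w * cinner (P b) b"
    apply (simp add: add sc cinner_add_left cinner_add_right cinner_cscale_left cinner_cscale_right sym u_def[symmetric])
    apply (simp add: algebra_simps)
    done
  moreover have "cnj w * u = of_real (cmod u)" "w * cnj u = of_real (cmod u)" "w * cnj w = 1"
  proof -
    have n: "u * cnj u = (of_real (cmod u))^2" by (metis complex_norm_square of_real_power)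
    have nz: "(of_real (cmod u) :: complex) \<noteq> 0" using u0 by simp
    show "cnj w * u = of_real (cmod u)" unfolding w_def using n nz
      by (simp add: field_simps power2_eq_square mult.commute)
    show "w * cnj u = of_real (cmod u)" unfolding w_def using n nz
      by (simp add: field_simps power2_eq_square)
    show "w * cnj w = 1" unfolding w_def using n nz
      by (simp add: field_simps power2_eq_square)
  qed
  ultimately show ?thesis unfolding u_def by simp
qed


declare cscale_one[simp]

lemma decomp:
  fixes S :: "('h::chilbert \<Rightarrow> 'h) set"
  assumes os: "operator_system S"
    and sa: "S_sa S = {(\<lambda>x. P x - Q x) | P Q. P \<in> S_pos S \<and> Q \<in> S_pos S}"
    and T: "T \<in> S"
  shows "\<exists>P1 P2 P3 P4. P1 \<in> S_pos S \<and> P2 \<in> S_pos S \<and> P3 \<in> S_pos S \<and> P4 \<in> S_pos S \<and>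
     (\<forall>x. T x = P1 x - P2 x + cscale \<i> (P3 x - P4 x))"
proof -
  from os have add: "\<forall>T\<in>S. \<forall>U\<in>S. (\<lambda>x. T x + U x) \<in> S"
    and sc: "\<forall>c. \<forall>T\<in>S. (\<lambda>x. cscale c (T x)) \<in> S"
    and adj: "\<forall>T\<in>S. \<exists>T'\<in>S. \<forall>x y. cinner (T x) y = cinner x (T' y)"
    unfolding operator_system_def by blast+
  obtain T' where T'S: "T' \<in> S" and T'a: "\<And>x y. cinner (T x) y = cinner x (T' y)" using adj T by blast
  have T'c: "cinner (T' x) y = cinner x (T y)" for x y by (metis T'a cinner_conj)
  define H where "H = (\<lambda>x. cscale (1/2) (T x + T' x))"
  define K where "K = (\<lambda>x. cscale (-\<i>/2) (T x + cscale (-1) (T' x)))"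
  have "(\<lambda>x. T x + T' x) \<in> S" using add T T'S by blast
  from sc[rule_format, OF this] have HS: "H \<in> S" unfolding H_def by simp
  have "(\<lambda>x. cscale (-1) (T' x)) \<in> S" using sc T'S by blast
  from add[rule_format, OF T this] have "(\<lambda>x. T x + cscale (-1) (T' x)) \<in> S" by simp
  from sc[rule_format, OF this] have KS: "K \<in> S" unfolding K_def by simp
  have Hsa: "sa_op H" unfolding sa_op_def H_def
    by (simp add: cinner_add_left cinner_add_right cinner_cscale_left cinner_cscale_right T'a T'c algebra_simps)
  have Ksa: "sa_op K" unfolding sa_op_def K_def
    by (simp add: cinner_add_left cinner_add_right cinner_cscale_left cinner_cscale_right T'a T'c algebra_simps)
  have "H \<in> S_sa S" using HS Hsa unfolding S_sa_def by blast
  then obtain P1 P2 where P12: "P1 \<in> S_pos S" "P2 \<in> S_pos S" "H = (\<lambda>x. P1 x - P2 x)"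
    unfolding sa by blast
  have "K \<in> S_sa S" using KS Ksa unfolding S_sa_def by blast
  then obtain P3 P4 where P34: "P3 \<in> S_pos S" "P4 \<in> S_pos S" "K = (\<lambda>x. P3 x - P4 x)"
    unfolding sa by blast
  have HK: "T x = H x + cscale \<i> (K x)" for x
  proof -
    have "H x + cscale \<i> (K x) = cscale (1/2) (T x) + cscale (1/2) (T' x) + (cscale (1/2) (T x) + cscale (-1/2) (T' x))"
      by (simp add: H_def K_def cscale_add_right cscale_cscale)
    also have "\<dots> = cscale (1/2 + 1/2) (T x) + cscale (1/2 + -1/2) (T' x)"
      unfolding cscale_add_left by (simp only: add_ac)
    also have "\<dots> = T x" by simp
    finally show ?thesis by simp
  qed
  show ?thesis
    apply (rule exI[of _ P1], rule exI[of _ P2], rule exI[of _ P3], rule exI[of _ P4])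
    using P12 P34 HK by simp
qed


lemma sum_in_S:
  fixes S :: "('h::chilbert \<Rightarrow> 'h) set"
  assumes os: "operator_system S" and fin: "finite A" and QS: "\<forall>f\<in>A. Q f \<in> S"
  shows "(\<lambda>x. \<Sum>f\<in>A. Q f x) \<in> S"
  using fin QS
proof (induction A rule: finite_induct)
  case empty
  then show ?case using os unfolding operator_system_def by simp
next
  case (insert a A)
  have IH: "(\<lambda>x. \<Sum>f\<in>A. Q f x) \<in> S" using insert by simp
  have Qa: "Q a \<in> S" using insert by simp
  have "\<forall>T\<in>S. \<forall>U\<in>S. (\<lambda>x. T x + U x) \<in> S" using os unfolding operator_system_def by blast
  from this[rule_format, OF Qa IH] show ?case using insert by simp
qed

lemma core:
  fixes S :: "('h::chilbert \<Rightarrow> 'h) set" and Q :: "'f \<Rightarrow> ('h \<Rightarrow> 'h)"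
  assumes os: "operator_system S" and fin: "finite F" and Qpos: "\<forall>f\<in>F. Q f \<in> S_pos S"
    and span: "\<forall>T\<in>S. \<exists>\<gamma>. \<forall>x. T x = (\<Sum>f\<in>F. cscale (\<gamma> f) (Q f x))"
  shows "\<exists>e \<in> S_pos S. \<forall>n\<ge>1. \<forall>X \<in> Mn_sa n S. \<exists>lam::real. lam > 0 \<and>
           mat_add (mat_scale (complex_of_real lam) (diag_op e)) X \<in> Mn_pos n S \<and>
           mat_add (mat_scale (complex_of_real lam) (diag_op e)) (mat_scale (-1) X) \<in> Mn_pos n S"
proof -
  from os have zero: "(\<lambda>x. 0) \<in> S" and add: "\<forall>T\<in>S. \<forall>U\<in>S. (\<lambda>x. T x + U x) \<in> S"
    and sc: "\<forall>c. \<forall>T\<in>S. (\<lambda>x. cscale c (T x)) \<in> S"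
    and bdd: "\<forall>T\<in>S. bounded_op T"
    unfolding operator_system_def by blast+
  have QS: "\<forall>f\<in>F. Q f \<in> S" and Qp: "\<And>f. f \<in> F \<Longrightarrow> pos_op (Q f)"
    using Qpos unfolding S_pos_def by auto
  have Qadd: "\<And>f x y. f \<in> F \<Longrightarrow> Q f (x + y) = Q f x + Q f y"
    and Qsc: "\<And>f c x. f \<in> F \<Longrightarrow> Q f (cscale c x) = cscale c (Q f x)"
    using QS bdd unfolding bounded_op_def by blast+
  have Qim: "\<And>f x. f \<in> F \<Longrightarrow> Im (cinner (Q f x) x) = 0"
    and Qre: "\<And>f x. f \<in> F \<Longrightarrow> Re (cinner (Q f x) x) \<ge> 0"
    using Qp unfolding pos_op_def by blast+
  have Qcs: "\<And>f a b. f \<in> F \<Longrightarrow> 2 * cmod (cinner (Q f a) b) \<le> Re (cinner (Q f a) a) + Re (cinner (Q f b) b)"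
    by (rule pos_cs[OF Qp Qadd Qsc])
  define e where "e = (\<lambda>x. \<Sum>f\<in>F. Q f x)"
  have eS: "e \<in> S" unfolding e_def by (rule sum_in_S[OF os fin QS])
  have einner: "cinner (e x) x = (\<Sum>f\<in>F. cinner (Q f x) x)" for x
    by (simp add: e_def cinner_sum_left)
  have eim: "Im (cinner (e x) x) = 0" for x unfolding einner using Qim by (simp add: Im_sum)
  have ere: "Re (cinner (e x) x) = (\<Sum>f\<in>F. Re (cinner (Q f x) x))" for x unfolding einner by (simp add: Re_sum)
  have epos: "pos_op e" unfolding pos_op_def using eim ere Qre by (simp add: sum_nonneg)
  have eSp: "e \<in> S_pos S" using eS epos unfolding S_pos_def by blast
  obtain G where G: "\<forall>T\<in>S. \<forall>x. T x = (\<Sum>f\<in>F. cscale (G T f) (Q f x))"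
    using span by metis
  show ?thesis
  proof (intro bexI[OF _ eSp] allI impI ballI)
    fix n :: nat and X
    assume "n \<ge> 1" and XM: "X \<in> Mn_sa n S"
    have XS: "\<And>i j. i < n \<Longrightarrow> j < n \<Longrightarrow> X i j \<in> S" and Xsa: "mat_sa n X"
      using XM unfolding Mn_sa_def Mn_def by auto
    define M where "M = (\<Sum>i<n. \<Sum>j<n. \<Sum>f\<in>F. cmod (G (X i j) f))"
    define lam where "lam = real n * M + 1"
    have M0: "M \<ge> 0" unfolding M_def by (simp add: sum_nonneg)
    have "real n * M \<ge> 0" using M0 by simp
    hence lam0: "lam > 0" unfolding lam_def by simp
    have Mb: "cmod (G (X i j) f) \<le> M" if "i < n" "j < n" "f \<in> F" for i j f
    proof -
      have "cmod (G (X i j) f) \<le> (\<Sum>f\<in>F. cmod (G (X i j) f))"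
        using that fin by (intro member_le_sum) auto
      also have "\<dots> \<le> (\<Sum>j<n. \<Sum>f\<in>F. cmod (G (X i j) f))"
        using that by (intro member_le_sum) (auto simp: sum_nonneg)
      also have "\<dots> \<le> M" unfolding M_def
        using that by (intro member_le_sum) (auto simp: sum_nonneg)
      finally show ?thesis .
    qed
    have key: "mat_pos n (\<lambda>i j x. cscale (complex_of_real lam) (diag_op e i j x) + cscale s (X i j x))"
      if s: "s = 1 \<or> s = -1" for s
      unfolding mat_pos_def
    proof
      fix \<xi> :: "nat \<Rightarrow> 'h"
      define q where "q = (\<Sum>i<n. \<Sum>j<n. cinner (X i j (\<xi> j)) (\<xi> i))"
      define E where "E = (\<Sum>i<n. cinner (e (\<xi> i)) (\<xi> i))"
      define R where "R = (\<Sum>i<n. \<Sum>f\<in>F. Re (cinner (Q f (\<xi> i)) (\<xi> i)))"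
      have dg: "cinner (diag_op e i j (\<xi> j)) (\<xi> i) = (if i = j then cinner (e (\<xi> i)) (\<xi> i) else 0)" for i j
        by (simp add: diag_op_def)
      have form: "(\<Sum>i<n. \<Sum>j<n. cinner (cscale (complex_of_real lam) (diag_op e i j (\<xi> j)) + cscale s (X i j (\<xi> j))) (\<xi> i))
          = complex_of_real lam * E + s * q" (is "?L = _")
      proof -
        have ds: "(\<Sum>j<n. cinner (diag_op e i j (\<xi> j)) (\<xi> i)) = cinner (e (\<xi> i)) (\<xi> i)" if "i < n" for i
          using that by (simp add: dg)
        have "?L = (\<Sum>i<n. complex_of_real lam * (\<Sum>j<n. cinner (diag_op e i j (\<xi> j)) (\<xi> i)) + s * (\<Sum>j<n. cinner (X i j (\<xi> j)) (\<xi> i)))"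
          by (simp add: cinner_add_left cinner_cscale_left sum.distrib sum_distrib_left)
        also have "\<dots> = (\<Sum>i<n. complex_of_real lam * cinner (e (\<xi> i)) (\<xi> i) + s * (\<Sum>j<n. cinner (X i j (\<xi> j)) (\<xi> i)))"
          by (intro sum.cong refl) (simp add: ds)
        also have "\<dots> = complex_of_real lam * E + s * q"
          by (simp add: sum.distrib sum_distrib_left q_def E_def)
        finally show ?thesis .
      qed
      have EIm: "Im E = 0" unfolding E_def using eim by (simp add: Im_sum)
      have ERe: "Re E = R" unfolding E_def R_def using ere by (simp add: Re_sum)
      have R0: "R \<ge> 0" unfolding R_def using Qre by (simp add: sum_nonneg)
      have "cnj q = (\<Sum>i<n. \<Sum>j<n. cinner (\<xi> i) (X i j (\<xi> j)))"
        unfolding q_def by (simp add: cinner_conj[of "\<xi> _"])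
      also have "\<dots> = (\<Sum>i<n. \<Sum>j<n. cinner (X j i (\<xi> i)) (\<xi> j))"
        using Xsa unfolding mat_sa_def by (intro sum.cong refl) auto
      also have "\<dots> = q" unfolding q_def by (rule sum.swap)
      finally have "cnj q = q" .
      hence "Im (cnj q) = Im q" by simp
      hence qIm: "Im q = 0" by simp
      define p where "p = (\<lambda>f x. Re (cinner (Q f x) x))"
      have qexp: "q = (\<Sum>i<n. \<Sum>j<n. \<Sum>f\<in>F. G (X i j) f * cinner (Q f (\<xi> j)) (\<xi> i))"
        unfolding q_def
      proof (intro sum.cong refl)
        fix i j assume "i \<in> {..<n}" "j \<in> {..<n}"
        hence "X i j (\<xi> j) = (\<Sum>f\<in>F. cscale (G (X i j) f) (Q f (\<xi> j)))" using G XS by auto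
        thus "cinner (X i j (\<xi> j)) (\<xi> i) = (\<Sum>f\<in>F. G (X i j) f * cinner (Q f (\<xi> j)) (\<xi> i))"
          by (simp add: cinner_sum_left cinner_cscale_left)
      qed
      have "cmod q \<le> (\<Sum>i<n. \<Sum>j<n. \<Sum>f\<in>F. cmod (G (X i j) f * cinner (Q f (\<xi> j)) (\<xi> i)))"
        unfolding qexp
        by (rule order_trans[OF norm_sum sum_mono], rule order_trans[OF norm_sum sum_mono],
            rule order_trans[OF norm_sum sum_mono], simp)
      also have "\<dots> \<le> (\<Sum>i<n. \<Sum>j<n. \<Sum>f\<in>F. M * ((p f (\<xi> j) + p f (\<xi> i)) / 2))"
      proof (intro sum_mono)
        fix i j f assume "i \<in> {..<n}" "j \<in> {..<n}" "f \<in> F"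
        hence "cmod (G (X i j) f) \<le> M" "cmod (cinner (Q f (\<xi> j)) (\<xi> i)) \<le> (p f (\<xi> j) + p f (\<xi> i)) / 2"
          using Mb Qcs[of f "\<xi> j" "\<xi> i"] unfolding p_def by auto
        thus "cmod (G (X i j) f * cinner (Q f (\<xi> j)) (\<xi> i)) \<le> M * ((p f (\<xi> j) + p f (\<xi> i)) / 2)"
          unfolding norm_mult using M0 by (intro mult_mono) auto
      qed
      also have "\<dots> = (\<Sum>i<n. \<Sum>j<n. \<Sum>f\<in>F. M / 2 * p f (\<xi> j) + M / 2 * p f (\<xi> i))"
        by (intro sum.cong refl) (simp add: field_simps)
      also have "\<dots> = M / 2 * ((\<Sum>i<n. \<Sum>j<n. \<Sum>f\<in>F. p f (\<xi> j)) + (\<Sum>i<n. \<Sum>j<n. \<Sum>f\<in>F. p f (\<xi> i)))"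
        by (simp only: sum.distrib sum_distrib_left distrib_left)
      also have "\<dots> = M / 2 * (real n * R + real n * R)"
      proof -
        have A1: "(\<Sum>i<n. \<Sum>j<n. \<Sum>f\<in>F. p f (\<xi> j)) = real n * R"
          unfolding R_def p_def by simp
        have A2: "(\<Sum>i<n. \<Sum>j<n. \<Sum>f\<in>F. p f (\<xi> i)) = real n * R"
          unfolding R_def p_def by (simp add: sum_distrib_left)
        show ?thesis by (simp only: A1 A2)
      qed
      also have "\<dots> = real n * M * R" by (simp add: field_simps)
      finally have qb: "cmod q \<le> real n * M * R" .
      have "Re (complex_of_real lam * E + s * q) \<ge> 0"
      proof -
        have "Re (s * q) \<ge> - cmod q" using s abs_Re_le_cmod[of q] by auto
        hence "Re (complex_of_real lam * E + s * q) \<ge> lam * R - real n * M * R"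
          using qb ERe by simp
        also have "lam * R - real n * M * R = R" unfolding lam_def by (simp add: algebra_simps)
        finally show ?thesis using R0 by simp
      qed
      moreover have "Im (complex_of_real lam * E + s * q) = 0" using EIm qIm s by auto
      ultimately show "Im (\<Sum>i<n. \<Sum>j<n. cinner (cscale (complex_of_real lam) (diag_op e i j (\<xi> j)) + cscale s (X i j (\<xi> j))) (\<xi> i)) = 0 \<and>
          0 \<le> Re (\<Sum>i<n. \<Sum>j<n. cinner (cscale (complex_of_real lam) (diag_op e i j (\<xi> j)) + cscale s (X i j (\<xi> j))) (\<xi> i))"
        unfolding form by simp
    qed
    have dS: "diag_op e i j \<in> S" for i j using eS zero by (simp add: diag_op_def)
    have dsS: "mat_scale c (diag_op e) i j \<in> S" for c i j
      unfolding mat_scale_def using sc dS by blast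
    have X1S: "mat_scale c X i j \<in> S" if "i < n" "j < n" for c i j
      unfolding mat_scale_def using sc XS that by blast
    have M1: "mat_add (mat_scale (complex_of_real lam) (diag_op e)) X \<in> Mn n S"
      unfolding Mn_def mat_add_def using add dsS XS by auto
    have M2: "mat_add (mat_scale (complex_of_real lam) (diag_op e)) (mat_scale (-1) X) \<in> Mn n S"
      unfolding Mn_def mat_add_def using add dsS X1S by auto
    have P1: "mat_pos n (mat_add (mat_scale (complex_of_real lam) (diag_op e)) X)"
      using key[of 1] unfolding mat_add_def mat_scale_def by simp
    have P2: "mat_pos n (mat_add (mat_scale (complex_of_real lam) (diag_op e)) (mat_scale (-1) X))"
      using key[of "-1"] unfolding mat_add_def mat_scale_def by simp
    show "\<exists>lam::real. lam > 0 \<and>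
           mat_add (mat_scale (complex_of_real lam) (diag_op e)) X \<in> Mn_pos n S \<and>
           mat_add (mat_scale (complex_of_real lam) (diag_op e)) (mat_scale (-1) X) \<in> Mn_pos n S"
      using lam0 M1 M2 P1 P2 unfolding Mn_pos_def by blast
  qed
qed


theorem lemma8p5:
  fixes S :: "('h::chilbert \<Rightarrow> 'h) set"
  assumes "operator_system S"
    and "fin_dim_op S"
    and "S_sa S = {(\<lambda>x. P x - Q x) | P Q. P \<in> S_pos S \<and> Q \<in> S_pos S}"
  shows "\<exists>e \<in> S_pos S. \<forall>n\<ge>1. \<forall>X \<in> Mn_sa n S. \<exists>lam::real. lam > 0 \<and>
           mat_add (mat_scale (complex_of_real lam) (diag_op e)) X \<in> Mn_pos n S \<and>
           mat_add (mat_scale (complex_of_real lam) (diag_op e)) (mat_scale (-1) X) \<in> Mn_pos n S"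
proof -
  note os = assms(1) and sa = assms(3)
  obtain B where B: "finite B" "B \<subseteq> S" "S = {(\<lambda>x. \<Sum>b\<in>B. cscale (c b) (b x)) | c. True}"
    using assms(2) unfolding fin_dim_op_def by blast
  have "\<forall>b\<in>B. \<exists>P1 P2 P3 P4. P1 \<in> S_pos S \<and> P2 \<in> S_pos S \<and> P3 \<in> S_pos S \<and> P4 \<in> S_pos S \<and>
     (\<forall>x. b x = P1 x - P2 x + cscale \<i> (P3 x - P4 x))"
    using decomp[OF os sa] B(2) by blast
  then obtain P1 P2 P3 P4 where P: "\<And>b. b \<in> B \<Longrightarrow> P1 b \<in> S_pos S \<and> P2 b \<in> S_pos S \<and> P3 b \<in> S_pos S \<and> P4 b \<in> S_pos S \<and>
     (\<forall>x. b x = P1 b x - P2 b x + cscale \<i> (P3 b x - P4 b x))"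
    by metis
  define dd :: "nat \<Rightarrow> complex" where "dd k = (if k = 0 then 1 else if k = 1 then -1 else if k = 2 then \<i> else -\<i>)" for k
  define Q where "Q = (\<lambda>(b, k::nat). if k = 0 then P1 b else if k = 1 then P2 b else if k = 2 then P3 b else P4 b)"
  define F where "F = B \<times> {..<4::nat}"
  have fin: "finite F" unfolding F_def using B(1) by simp
  have Qpos: "\<forall>f\<in>F. Q f \<in> S_pos S"
    unfolding F_def Q_def using P by auto
  have bexp: "b x = (\<Sum>k<4. cscale (dd k) (Q (b, k) x))" if "b \<in> B" for b x
    using P[OF that] by (simp add: eval_nat_numeral dd_def Q_def cscale_minus_left cscale_diff_right)
  have span: "\<forall>T\<in>S. \<exists>\<gamma>. \<forall>x. T x = (\<Sum>f\<in>F. cscale (\<gamma> f) (Q f x))"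
  proof
    fix T assume "T \<in> S"
    then obtain c where c: "T = (\<lambda>x. \<Sum>b\<in>B. cscale (c b) (b x))" using B(3) by blast
    show "\<exists>\<gamma>. \<forall>x. T x = (\<Sum>f\<in>F. cscale (\<gamma> f) (Q f x))"
    proof (intro exI allI)
      fix x
      have "T x = (\<Sum>b\<in>B. cscale (c b) (\<Sum>k<4. cscale (dd k) (Q (b, k) x)))"
        unfolding c using bexp by (intro sum.cong refl) auto
      also have "\<dots> = (\<Sum>b\<in>B. \<Sum>k<4. cscale (c b * dd k) (Q (b, k) x))"
        by (simp add: cscale_sum_right cscale_cscale)
      also have "\<dots> = (\<Sum>f\<in>F. cscale ((\<lambda>(b, k). c b * dd k) f) (Q f x))"
        unfolding F_def by (simp add: sum.cartesian_product split_def)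
      finally show "T x = (\<Sum>f\<in>F. cscale ((\<lambda>(b, k). c b * dd k) f) (Q f x))" .
    qed
  qed
  show ?thesis by (rule core[OF os fin Qpos span])
qed

end
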